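(* Let $n\ge3$ and let $\mathbf{u}\approx\mathbf{v}$ be an efficient rigid identity that is violated by $\mathbf{A}_n$ but satisfied by $\mathbf{A}_n\{\mathtt{B}_n\}$. Then the set $\{\mathbf{u}\approx\mathbf{v}\}$ is equivalent (i.e. each is derivable from the other, so they define the same variety) to some subset of the identities in $\mathtt{B}_n$, namely to a set of identities of the form $\mathbf{s}\approx\mathbf{t}$ with $\mathbf{s},\mathbf{t}\in\mathsf{B}_n$ (up to renaming the variable $t$).
   Context: All varieties are varieties of monoids (signature: associative binary operation and identity constant $1$). Words are elements of the free monoid $X^*$ over a countably infinite set $X$ of variables; identities are pairs of words, and variables may be substituted by $1$. For a variety $\mathbf{V}$ and set $\Sigma$ of identities, $\mathbf{V}\Sigma$ is the subvariety defined by $\Sigma$. $\mathbf{O}$ is the variety defined by $xyt_1xt_2y \approx yxt_1xt_2y$, $xt_1xyt_2y \approx xt_1yxt_2y$, $xt_1yt_2xy \approx xt_1yt_2yx$. For $n\ge3$, $\mathtt{A}_n$ is $x^n t_1\cdots t_n \approx t_1x\,t_2x\cdots t_nx$, $\mathtt{B}_n$ is the set of identities $x^{n-1}t \approx x^{n-2}tx \approx\cdots\approx xtx^{n-2}\approx tx^{n-1}$, $\mathsf{B}_n=\{x^{n-1-j}tx^{j}:0\le j\le n-1\}$, and $\mathbf{A}_n=\mathbf{O}\{\mathtt{A}_n\}$. A rigid identity is an identity $x^{e_0}t_1x^{e_1}\cdots t_rx^{e_r}\approx x^{f_0}t_1x^{f_1}\cdots t_rx^{f_r}$ with $r\ge0$,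 $e_i,f_i\ge0$ and $x,t_1,\dots,t_r$ distinct variables; it is efficient if $(e_i,f_i)\ne(0,0)$ for every $i=0,\dots,r$. *)

theory Defs
  imports Main
begin

(* Variables are natural numbers (a countably infinite set X); words are
   elements of the free monoid X^*, i.e. lists; an identity is a pair of words. *)
type_synonym word = "nat list"
type_synonym identity = "word \<times> word"

(* Substitution: a monoid endomorphism of X^*, given by images of variables
   (variables may be sent to the empty word 1). *)
definition subst :: "(nat \<Rightarrow> word) \<Rightarrow> word \<Rightarrow> word" where
  "subst \<sigma> w = concat (map \<sigma> w)"

(* By Birkhoff's completeness theorem, derives Sigma u v holds iff every monoid
   satisfying Sigma satisfies u ~ v, i.e. iff the variety defined by Sigma
   satisfies u ~ v. *)
inductive derives :: "identity set \<Rightarrow> word \<Rightarrow> word \<Rightarrow> bool" for \<Sigma> where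
  ax:    "(u, v) \<in> \<Sigma> \<Longrightarrow> derives \<Sigma> u v"
| refl:  "derives \<Sigma> u u"
| sym:   "derives \<Sigma> u v \<Longrightarrow> derives \<Sigma> v u"
| trans: "derives \<Sigma> u v \<Longrightarrow> derives \<Sigma> v w \<Longrightarrow> derives \<Sigma> u w"
| subst: "derives \<Sigma> u v \<Longrightarrow> derives \<Sigma> (subst \<sigma> u) (subst \<sigma> v)"
| mult:  "derives \<Sigma> u v \<Longrightarrow> derives \<Sigma> (p @ u @ q) (p @ v @ q)"

(* Defining identities of O, with x = 0, y = 1, t1 = 2, t2 = 3. *)
definition O_ids :: "identity set" where
  "O_ids = {([0,1,2,0,3,1], [1,0,2,0,3,1]),
            ([0,2,0,1,3,1], [0,2,1,0,3,1]),
            ([0,2,1,3,0,1], [0,2,1,3,1,0])}"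

(* The identity A_n : x^n t1 ... tn ~ t1 x t2 x ... tn x, with x = 0, ti = i. *)
definition A_identity :: "nat \<Rightarrow> identity" where
  "A_identity n = (replicate n 0 @ [1..<n+1], concat (map (\<lambda>i. [i, 0]) [1..<n+1]))"

definition An_ids :: "nat \<Rightarrow> identity set" where
  "An_ids n = O_ids \<union> {A_identity n}"

(* The set of words B_n = { x^(n-1-j) t x^j : 0 <= j <= n-1 }, with x = 0, t = 1. *)
definition B_words :: "nat \<Rightarrow> word set" where
  "B_words n = {replicate (n - 1 - j) 0 @ [1] @ replicate j 0 | j. j \<le> n - 1}"

definition B_ids :: "nat \<Rightarrow> identity set" where
  "B_ids n = {(s, t). s \<in> B_words n \<and> t \<in> B_words n}"

(* x^(e0) t1 x^(e1) ... tr x^(er), with ts = [t1,...,tr], es = [e0,...,er]. *)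
definition rigid_word :: "nat \<Rightarrow> nat list \<Rightarrow> nat list \<Rightarrow> word" where
  "rigid_word x ts es =
     replicate (es ! 0) x @ concat (map (\<lambda>i. (ts ! i) # replicate (es ! (i + 1)) x) [0..<length ts])"

definition efficient_rigid :: "word \<Rightarrow> word \<Rightarrow> bool" where
  "efficient_rigid u v \<longleftrightarrow>
     (\<exists>x ts es fs. distinct (x # ts) \<and>
        length es = length ts + 1 \<and> length fs = length ts + 1 \<and>
        (\<forall>i < length es. es ! i \<noteq> 0 \<or> fs ! i \<noteq> 0) \<and>
        u = rigid_word x ts es \<and> v = rigid_word x ts fs)"

end

theory Submission
  imports Defs
begin


lemma subst_Nil[simp]: "subst \<sigma> [] = []" by (simp add: subst_def)
lemma subst_Cons[simp]: "subst \<sigma> (a # w) = \<sigma> a @ subst \<sigma> w" by (simp add: subst_def)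
lemma subst_append[simp]: "subst \<sigma> (a @ b) = subst \<sigma> a @ subst \<sigma> b" by (simp add: subst_def)
lemma subst_replicate[simp]: "subst \<sigma> (replicate k a) = concat (replicate k (\<sigma> a))"
  by (induct k) auto
lemma subst_subst: "subst \<sigma> (subst \<tau> w) = subst (\<lambda>y. subst \<sigma> (\<tau> y)) w"
  by (induct w) auto
lemma subst_id: "subst (\<lambda>y. [y]) w = w" by (induct w) auto
lemma subst_concat_map: "subst \<sigma> (concat (map f L)) = concat (map (\<lambda>i. subst \<sigma> (f i)) L)"
  by (induct L) auto

lemma count_concat_map: "count_list (concat (map g L)) y = sum_list (map (\<lambda>i. count_list (g i) y) L)"
  by (induct L) auto
lemma count_concat_replicate: "count_list (concat (replicate k w)) y = k * count_list w y"
  by (induct k) auto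
lemma count_replicate: "count_list (replicate k a) y = (if a = y then k else 0)"
  by (induct k) auto
lemma sum_list_plus_const: "sum_list (map (\<lambda>i. f i + c) L) = sum_list (map f L) + length L * (c::nat)"
  by (induct L) auto

definition okw :: "nat \<Rightarrow> nat \<Rightarrow> word \<Rightarrow> bool" where
  "okw x n w \<longleftrightarrow> (\<forall>y. y \<noteq> x \<longrightarrow> count_list w y \<le> 1) \<and> count_list w x \<le> n - 1"

definition shape2 :: "nat \<Rightarrow> word \<Rightarrow> bool" where
  "shape2 x w \<longleftrightarrow> (\<exists>P W Q i j. w = P @ replicate i x @ W @ replicate j x @ Q \<and>
      x \<notin> set P \<and> x \<notin> set W \<and> x \<notin> set Q)"

definition NF :: "nat \<Rightarrow> nat \<Rightarrow> word \<Rightarrow> word + word" where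
  "NF x n w = (if count_list w x = n - 1 \<and> shape2 x w then Inl (filter (\<lambda>y. y \<noteq> x) w) else Inr w)"

definition Inv :: "nat \<Rightarrow> nat \<Rightarrow> word \<Rightarrow> word \<Rightarrow> bool" where
  "Inv x n u v \<longleftrightarrow> (\<forall>\<sigma> y. count_list (subst \<sigma> u) y = count_list (subst \<sigma> v) y) \<and>
     (\<forall>\<sigma>. okw x n (subst \<sigma> u) \<longrightarrow> NF x n (subst \<sigma> u) = NF x n (subst \<sigma> v))"

lemma count_filter_ne: "y \<noteq> x \<Longrightarrow> count_list (filter (\<lambda>z. z \<noteq> x) w) y = count_list w y"
  by (induct w) auto

lemma okw_counts: "(\<And>y. count_list a y = count_list b y) \<Longrightarrow> okw x n a = okw x n b"
  by (simp add: okw_def)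

lemma NF_counts: assumes "NF x n a = NF x n b" shows "count_list a y = count_list b y"
proof (cases "count_list a x = n - 1 \<and> shape2 x a")
  case True
  then have "count_list b x = n - 1 \<and> shape2 x b" and f: "filter (\<lambda>y. y \<noteq> x) a = filter (\<lambda>y. y \<noteq> x) b"
    using assms by (auto simp: NF_def split: if_splits)
  then show ?thesis using True count_filter_ne[of y x a] count_filter_ne[of y x b]
    by (cases "y = x") auto
next
  case False
  then show ?thesis using assms by (auto simp: NF_def split: if_splits)
qed

lemma shape2_ext: assumes "shape2 x w" "x \<notin> set p" "x \<notin> set q" shows "shape2 x (p @ w @ q)"
proof -
  obtain P W Q i j where "w = P @ replicate i x @ W @ replicate j x @ Q" "x \<notin> set P" "x \<notin> set W" "x \<notin> set Q"
    using assms(1) unfolding shape2_def by blast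
  then show ?thesis unfolding shape2_def using assms(2,3)
    by (intro exI[of _ "p @ P"] exI[of _ W] exI[of _ "Q @ q"] exI[of _ i] exI[of _ j]) auto
qed

lemma NF_cong:
  assumes ok: "okw x n (p @ a @ q)" and e: "NF x n a = NF x n b"
  shows "NF x n (p @ a @ q) = NF x n (p @ b @ q)"
proof (cases "count_list a x = n - 1 \<and> shape2 x a")
  case True
  then have b: "count_list b x = n - 1 \<and> shape2 x b" and f: "filter (\<lambda>y. y \<noteq> x) a = filter (\<lambda>y. y \<noteq> x) b"
    using e by (auto simp: NF_def split: if_splits)
  have "count_list p x = 0" "count_list q x = 0" using ok True by (auto simp: okw_def)
  then have px: "x \<notin> set p" "x \<notin> set q" by (auto simp: count_list_0_iff)
  have "shape2 x (p @ a @ q)" "shape2 x (p @ b @ q)" using True b px shape2_ext by auto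
  then show ?thesis using True b f px by (simp add: NF_def)
next
  case False
  then have "a = b" using e by (auto simp: NF_def split: if_splits)
  then show ?thesis by simp
qed

lemma derives_Inv:
  assumes "derives \<Sigma> u v" "\<And>l r. (l, r) \<in> \<Sigma> \<Longrightarrow> Inv x n l r"
  shows "Inv x n u v"
  using assms(1)
proof induct
  case (ax u v) then show ?case using assms(2) by blast
next
  case (refl u) then show ?case by (simp add: Inv_def)
next
  case (sym u v) then show ?case
    by (simp add: Inv_def) (metis NF_counts okw_counts)
next
  case (trans u v w) then show ?case
    apply (simp add: Inv_def)
    by (metis okw_counts)
next
  case (subst u v \<tau>) then show ?case
    by (simp add: Inv_def subst_subst)
next
  case (mult u v p q)
  show ?case unfolding Inv_def
  proof (intro conjI allI impI)
    fix \<sigma> y show "count_list (subst \<sigma> (p @ u @ q)) y = count_list (subst \<sigma> (p @ v @ q)) y"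
      using mult(2) by (simp add: Inv_def)
  next
    fix \<sigma> assume ok: "okw x n (subst \<sigma> (p @ u @ q))"
    then have "okw x n (subst \<sigma> u)" by (auto simp: okw_def)
    then have "NF x n (subst \<sigma> u) = NF x n (subst \<sigma> v)" using mult(2) by (simp add: Inv_def)
    then show "NF x n (subst \<sigma> (p @ u @ q)) = NF x n (subst \<sigma> (p @ v @ q))"
      using NF_cong ok by simp
  qed
qed




lemma okw_le1: "okw x n w \<Longrightarrow> y \<noteq> x \<Longrightarrow> count_list w y \<le> 1"
  by (simp add: okw_def)

lemma xonly: "(\<forall>y\<in>set a. y = x) \<Longrightarrow> a = replicate (length a) x"
  by (induct a) auto

lemma in_count: "y \<in> set a \<Longrightarrow> count_list a y \<ge> 1"
  using count_list_0_iff[of a y] by simp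

lemma rep_comm: "replicate a x @ replicate b x = replicate b x @ replicate a x"
  by (simp add: replicate_add[symmetric] add.commute)

lemma O_xonly:
  assumes ok: "okw x n w" and c: "\<And>y. count_list w y \<ge> 2 * count_list a y"
  shows "\<forall>y\<in>set a. y = x"
proof
  fix y assume y: "y \<in> set a"
  show "y = x"
  proof (rule ccontr)
    assume "y \<noteq> x"
    then have "count_list w y \<le> 1" using okw_le1 ok by blast
    moreover have "count_list a y \<ge> 1" by (rule in_count[OF y])
    ultimately show False using c[of y] by linarith
  qed
qed

lemma Inv_O: assumes "(l, r) \<in> O_ids" shows "Inv x n l r"
proof -
  have key: "\<sigma> 0 @ \<sigma> 1 = \<sigma> 1 @ \<sigma> 0" if ok: "okw x n (subst \<sigma> l)" for \<sigma>
  proof -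
    have c0: "\<And>y. count_list (subst \<sigma> l) y \<ge> 2 * count_list (\<sigma> 0) y"
     and c1: "\<And>y. count_list (subst \<sigma> l) y \<ge> 2 * count_list (\<sigma> 1) y"
      using assms by (auto simp: O_ids_def)
    obtain a b where s0: "\<sigma> 0 = replicate a x" and s1: "\<sigma> 1 = replicate b x"
      using xonly[OF O_xonly[OF ok c0]] xonly[OF O_xonly[OF ok c1]] by blast
    show ?thesis unfolding s0 s1 by (simp add: replicate_add[symmetric] add.commute)
  qed
  show ?thesis unfolding Inv_def
  proof (intro conjI allI impI)
    fix \<sigma> y show "count_list (subst \<sigma> l) y = count_list (subst \<sigma> r) y"
      using assms by (auto simp: O_ids_def)
  next
    fix \<sigma> assume ok: "okw x n (subst \<sigma> l)"
    have k: "\<sigma> 0 @ \<sigma> 1 = \<sigma> 1 @ \<sigma> 0" using key ok by blast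
    have k1: "\<sigma> 0 @ \<sigma> (Suc 0) = \<sigma> (Suc 0) @ \<sigma> 0" using k by simp
    have k2: "\<sigma> 0 @ \<sigma> (Suc 0) @ w = \<sigma> (Suc 0) @ \<sigma> 0 @ w" for w
      using k1 by (metis append.assoc)
    have "subst \<sigma> l = subst \<sigma> r" using assms
      unfolding O_ids_def by (auto simp: k1 k2)
    then show "NF x n (subst \<sigma> l) = NF x n (subst \<sigma> r)" by simp
  qed
qed

lemma Inv_A: assumes n: "n \<ge> 3" shows "Inv x n (fst (A_identity n)) (snd (A_identity n))"
proof -
  let ?L = "[1..<n+1]"
  have sl: "subst \<sigma> (fst (A_identity n)) = concat (replicate n (\<sigma> 0)) @ concat (map \<sigma> ?L)" for \<sigma>
    by (simp add: A_identity_def subst_def)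
  have sr: "subst \<sigma> (snd (A_identity n)) = concat (map (\<lambda>i. \<sigma> i @ \<sigma> 0) ?L)" for \<sigma>
    by (simp add: A_identity_def subst_concat_map)
  have cnt: "count_list (subst \<sigma> (fst (A_identity n))) y = n * count_list (\<sigma> 0) y + sum_list (map (\<lambda>i. count_list (\<sigma> i) y) ?L)"
    for \<sigma> y
    using count_concat_map[of \<sigma> ?L y] by (simp add: sl count_concat_replicate)
  show ?thesis unfolding Inv_def
  proof (intro conjI allI impI)
    fix \<sigma> y show "count_list (subst \<sigma> (fst (A_identity n))) y = count_list (subst \<sigma> (snd (A_identity n))) y"
      unfolding cnt sr count_concat_map by (simp add: sum_list_plus_const)
  next
    fix \<sigma> assume ok: "okw x n (subst \<sigma> (fst (A_identity n)))"
    have e: "\<sigma> 0 = []"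
    proof (rule ccontr)
      assume "\<sigma> 0 \<noteq> []"
      then obtain y where y: "y \<in> set (\<sigma> 0)" by (cases "\<sigma> 0") auto
      have "count_list (subst \<sigma> (fst (A_identity n))) y \<ge> n * 1"
        unfolding cnt using in_count[OF y] by (metis le_add1 mult_le_mono2 order_trans)
      then show False using ok n unfolding okw_def by (cases "y = x") fastforce+
    qed
    have "subst \<sigma> (fst (A_identity n)) = subst \<sigma> (snd (A_identity n))"
      unfolding sl sr e by simp
    then show "NF x n (subst \<sigma> (fst (A_identity n))) = NF x n (subst \<sigma> (snd (A_identity n)))" by simp
  qed
qed

lemma Inv_B: assumes n: "n \<ge> 3" and "(l, r) \<in> B_ids n" shows "Inv x n l r"
proof -
  obtain j k where j: "j \<le> n - 1" "l = replicate (n - 1 - j) 0 @ [1] @ replicate j 0"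
    and k: "k \<le> n - 1" "r = replicate (n - 1 - k) 0 @ [1] @ replicate k 0"
    using assms(2) by (auto simp: B_ids_def B_words_def)
  have sb: "subst \<sigma> (replicate (n - 1 - j) 0 @ [1] @ replicate j 0) =
     concat (replicate (n - 1 - j) (\<sigma> 0)) @ \<sigma> 1 @ concat (replicate j (\<sigma> 0))" for \<sigma> j by simp
  have cb: "count_list (subst \<sigma> (replicate (n - 1 - j) 0 @ [1] @ replicate j 0)) y =
      (n - 1) * count_list (\<sigma> 0) y + count_list (\<sigma> 1) y" if "j \<le> n - 1" for \<sigma> j y
  proof -
    have "(n - 1 - j) * count_list (\<sigma> 0) y + j * count_list (\<sigma> 0) y = (n - 1) * count_list (\<sigma> 0) y"
      using that by (metis add_mult_distrib le_add_diff_inverse2)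
    then show ?thesis unfolding sb by (simp add: count_concat_replicate)
  qed
  have main: "NF x n (subst \<sigma> (replicate (n - 1 - j) 0 @ [1] @ replicate j 0)) =
     (if \<sigma> 0 = [] then NF x n (\<sigma> 1) else Inl (\<sigma> 1))"
    if ok: "okw x n (subst \<sigma> (replicate (n - 1 - j) 0 @ [1] @ replicate j 0))" and jj: "j \<le> n - 1" for \<sigma> j
  proof -
    have xo: "\<forall>y\<in>set (\<sigma> 0). y = x"
    proof
      fix y assume y: "y \<in> set (\<sigma> 0)"
      show "y = x"
      proof (rule ccontr)
        assume "y \<noteq> x"
        then have "count_list (subst \<sigma> (replicate (n - 1 - j) 0 @ [1] @ replicate j 0)) y \<le> 1" using okw_le1 ok by blast
        moreover have "(n - 1) * count_list (\<sigma> 0) y \<ge> (n - 1) * 1" using in_count[OF y] by simp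
        ultimately show False using cb[OF jj, of \<sigma> y] n by linarith
      qed
    qed
    define m where "m = length (\<sigma> 0)"
    have s0: "\<sigma> 0 = replicate m x" using xonly[OF xo] m_def by simp
    have cx: "(n - 1) * m + count_list (\<sigma> 1) x \<le> n - 1"
      using ok cb[OF jj, of \<sigma> x] unfolding okw_def s0 by (simp add: count_replicate)
    show ?thesis
    proof (cases "m = 0")
      case True then show ?thesis unfolding sb s0 by simp
    next
      case False
      have "(n - 1) * m \<le> (n - 1) * 1" using cx by linarith
      then have "m \<le> 1" using n by (simp add: mult_le_cancel1)
      then have m1: "m = 1" using False by simp
      then have c1: "count_list (\<sigma> 1) x = 0" using cx by simp
      then have x1: "x \<notin> set (\<sigma> 1)" by (simp add: count_list_0_iff)
      have w: "subst \<sigma> (replicate (n - 1 - j) 0 @ [1] @ replicate j 0) = replicate (n - 1 - j) x @ \<sigma> 1 @ replicate j x"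
        unfolding sb s0 m1 by simp
      have "shape2 x (replicate (n - 1 - j) x @ \<sigma> 1 @ replicate j x)" unfolding shape2_def
        using x1 by (intro exI[of _ "[]"] exI[of _ "\<sigma> 1"] exI[of _ "[]"] exI[of _ "n-1-j"] exI[of _ j]) simp
      moreover have "count_list (replicate (n - 1 - j) x @ \<sigma> 1 @ replicate j x) x = n - 1"
        using c1 jj by (simp add: count_replicate)
      moreover have "filter (\<lambda>y. y \<noteq> x) (replicate (n - 1 - j) x @ \<sigma> 1 @ replicate j x) = \<sigma> 1"
        using x1 by (simp add: filter_id_conv) (metis filter_True)
      ultimately show ?thesis unfolding w NF_def using False s0 by simp
    qed
  qed
  show ?thesis unfolding Inv_def
  proof (intro conjI allI impI)
    fix \<sigma> y show "count_list (subst \<sigma> l) y = count_list (subst \<sigma> r) y"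
      unfolding j(2) k(2) cb[OF j(1)] cb[OF k(1)] ..
  next
    fix \<sigma> assume ok: "okw x n (subst \<sigma> l)"
    have ok2: "okw x n (subst \<sigma> r)" using ok okw_counts[of "subst \<sigma> l" "subst \<sigma> r"]
      unfolding j(2) k(2) cb[OF j(1)] cb[OF k(1)] by simp
    show "NF x n (subst \<sigma> l) = NF x n (subst \<sigma> r)"
      using main[OF ok[unfolded j(2)] j(1)] main[OF ok2[unfolded k(2)] k(1)] unfolding j(2) k(2) by simp
  qed
qed

lemma Inv_all: assumes n: "n \<ge> 3" and "(l, r) \<in> An_ids n \<union> B_ids n" shows "Inv x n l r"
proof -
  have "(l,r) \<in> O_ids \<or> (l,r) = A_identity n \<or> (l,r) \<in> B_ids n" using assms(2) by (auto simp: An_ids_def)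
  then show ?thesis
  proof (elim disjE)
    assume "(l,r) = A_identity n" then show ?thesis using Inv_A[OF n, of x] by (metis fst_conv snd_conv)
  qed (auto intro: Inv_O Inv_B[OF n])
qed




lemma derives_mult': "derives \<Sigma> u v \<Longrightarrow> u' = p @ u @ q \<Longrightarrow> v' = p @ v @ q \<Longrightarrow> derives \<Sigma> u' v'"
  using derives.mult by blast

lemma derives_subst': "derives \<Sigma> u v \<Longrightarrow> u' = subst \<sigma> u \<Longrightarrow> v' = subst \<sigma> v \<Longrightarrow> derives \<Sigma> u' v'"
  using derives.subst by blast

lemma concat_map_single: "concat (map (\<lambda>_. [x]) L) = replicate (length L) x"
  by (induct L) auto

lemma concat_map_nil: "(\<forall>i\<in>set L. f i = []) \<Longrightarrow> concat (map f L) = []"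
  by (induct L) auto

lemma filter_concat_map_x: "(\<forall>i. x \<notin> set (W i)) \<Longrightarrow>
   filter (\<lambda>y. y \<noteq> x) (concat (map (\<lambda>i. W i @ [x]) L)) = concat (map W L)"
  by (induct L) (auto simp: filter_id_conv)

lemma filter_concat_map_free: "(\<forall>i. x \<notin> set (W i)) \<Longrightarrow>
   filter (\<lambda>y. y \<noteq> x) (concat (map W L)) = concat (map W L)"
  by (induct L) (auto simp: filter_id_conv)

lemma LA:
  assumes "A_identity n \<in> \<Sigma>"
  shows "derives \<Sigma> (replicate n x @ concat (map W [1..<n+1])) (concat (map (\<lambda>i. W i @ [x]) [1..<n+1]))"
proof -
  define \<sigma> where "\<sigma> = (\<lambda>i. if i = 0 then [x] else W i)"
  have d: "derives \<Sigma> (fst (A_identity n)) (snd (A_identity n))"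
    using assms derives.ax by (metis prod.collapse)
  have m1: "map \<sigma> [1..<n+1] = map W [1..<n+1]" by (rule map_cong) (auto simp: \<sigma>_def simp del: upt_Suc)
  have m2: "map (\<lambda>i. \<sigma> i @ \<sigma> 0) [1..<n+1] = map (\<lambda>i. W i @ [x]) [1..<n+1]"
    by (rule map_cong) (auto simp: \<sigma>_def simp del: upt_Suc)
  have s0: "\<sigma> 0 = [x]" by (simp add: \<sigma>_def)
  show ?thesis
  proof (rule derives_subst'[OF d, of _ \<sigma>])
    have "subst \<sigma> (fst (A_identity n)) = concat (map \<sigma> (replicate n 0)) @ concat (map \<sigma> [1..<n+1])"
      by (simp add: A_identity_def subst_def del: upt_Suc)
    then show "replicate n x @ concat (map W [1..<n+1]) = subst \<sigma> (fst (A_identity n))"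
      unfolding m1 map_replicate s0 concat_replicate_single by simp
    have "subst \<sigma> (snd (A_identity n)) = concat (map (\<lambda>i. \<sigma> i @ \<sigma> 0) [1..<n+1])"
      by (simp add: A_identity_def subst_concat_map del: upt_Suc)
    then show "concat (map (\<lambda>i. W i @ [x]) [1..<n+1]) = subst \<sigma> (snd (A_identity n))"
      unfolding m2 by simp
  qed
qed

lemma L1:
  assumes "A_identity n \<in> \<Sigma>" "n \<ge> 1"
  shows "derives \<Sigma> (replicate n x @ V) (replicate (n - 1) x @ V @ [x])"
proof -
  define W where "W = (\<lambda>i. if i = n then V else ([]::word))"
  have u: "[1..<n+1] = [1..<n] @ [n]" using assms(2) by simp
  have a: "concat (map W [1..<n]) = []" by (rule concat_map_nil) (auto simp: W_def)
  have b: "map (\<lambda>i. W i @ [x]) [1..<n] = map (\<lambda>_. [x]) [1..<n]" by (rule map_cong) (auto simp: W_def simp del: upt_Suc)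
  have "concat (map W [1..<n+1]) = V" unfolding u using a by (simp add: W_def)
  moreover have "concat (map (\<lambda>i. W i @ [x]) [1..<n+1]) = replicate (n - 1) x @ V @ [x]"
    unfolding u map_append concat_append b concat_map_single by (simp add: W_def)
  ultimately show ?thesis using LA[OF assms(1), of x W] by simp
qed

lemma L2:
  assumes "A_identity n \<in> \<Sigma>" "n \<ge> 1"
  shows "derives \<Sigma> (replicate (Suc n) x @ V) (replicate n x @ V @ [x])"
proof (rule derives_mult'[OF L1[OF assms, of x V], of _ "[x]" "[]"])
  show "replicate (Suc n) x @ V = [x] @ (replicate n x @ V) @ []" by simp
  show "replicate n x @ V @ [x] = [x] @ (replicate (n - 1) x @ V @ [x]) @ []"
    using assms(2) by (cases n) auto
qed

lemma L3:
  assumes "A_identity n \<in> \<Sigma>" "n \<ge> 1"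
  shows "derives \<Sigma> (replicate n x @ V) (replicate (n + count_list V x) x @ filter (\<lambda>y. y \<noteq> x) V)"
proof (induct V rule: rev_induct)
  case Nil then show ?case by (simp add: derives.refl)
next
  case (snoc y V)
  show ?case
  proof (cases "y = x")
    case True
    have s1: "derives \<Sigma> (replicate n x @ V @ [x]) (replicate (Suc n) x @ V)"
      using L2[OF assms, of x V] derives.sym by blast
    have s2: "derives \<Sigma> (replicate (Suc n) x @ V) (replicate (Suc (n + count_list V x)) x @ filter (\<lambda>y. y \<noteq> x) V)"
      by (rule derives_mult'[OF snoc, of _ "[x]" "[]"]) auto
    show ?thesis using derives.trans[OF s1 s2] True by simp
  next
    case False
    have "derives \<Sigma> (replicate n x @ V @ [y]) (replicate (n + count_list V x) x @ filter (\<lambda>y. y \<noteq> x) V @ [y])"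
      by (rule derives_mult'[OF snoc, of _ "[]" "[y]"]) auto
    then show ?thesis using False by simp
  qed
qed

lemma L4:
  assumes "count_list w x \<ge> k"
  shows "\<exists>W rest. w = concat (map (\<lambda>i. W i @ [x]) [1..<k+1]) @ rest \<and> (\<forall>i. x \<notin> set (W i))"
  using assms
proof (induct k)
  case 0 then show ?case by (intro exI[of _ "\<lambda>_. []"] exI[of _ w]) auto
next
  case (Suc k)
  then obtain W rest where w: "w = concat (map (\<lambda>i. W i @ [x]) [1..<k+1]) @ rest" and Wx: "\<forall>i. x \<notin> set (W i)"
    by auto
  have c1: "count_list (concat (map (\<lambda>i. W i @ [x]) [1..<k+1])) x = k"
    unfolding count_concat_map using Wx by (simp add: count_list_0_iff) (simp add: sum_list_triv)
  have "count_list rest x \<ge> 1" using Suc(2) unfolding w using c1 by simp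
  then have "x \<in> set rest" using count_list_0_iff[of rest x] by simp
  then obtain W' rest' where r: "rest = W' @ x # rest'" and W'x: "x \<notin> set W'"
    using split_list_first by metis
  define W2 where "W2 = W(Suc k := W')"
  have m: "map (\<lambda>i. W2 i @ [x]) [1..<k+1] = map (\<lambda>i. W i @ [x]) [1..<k+1]"
    by (rule map_cong) (auto simp: W2_def simp del: upt_Suc)
  have U: "[1..<Suc k+1] = [1..<k+1] @ [Suc k]" by simp
  have "w = concat (map (\<lambda>i. W2 i @ [x]) [1..<Suc k+1]) @ rest'"
    unfolding w r U map_append concat_append m by (simp add: W2_def)
  moreover have "\<forall>i. x \<notin> set (W2 i)" using Wx W'x by (simp add: W2_def)
  ultimately show ?case by blast
qed

lemma L5:
  assumes "A_identity n \<in> \<Sigma>" "n \<ge> 1" "count_list w x \<ge> n"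
  shows "derives \<Sigma> w (replicate (count_list w x) x @ filter (\<lambda>y. y \<noteq> x) w)"
proof -
  obtain W rest where w: "w = concat (map (\<lambda>i. W i @ [x]) [1..<n+1]) @ rest" and Wx: "\<forall>i. x \<notin> set (W i)"
    using L4[OF assms(3)] by blast
  define V where "V = concat (map W [1..<n+1]) @ rest"
  have s1: "derives \<Sigma> w (replicate n x @ V)"
    unfolding w V_def by (rule derives_mult'[OF derives.sym[OF LA[OF assms(1), of x W]], of _ "[]" rest]) auto
  have s2: "derives \<Sigma> (replicate n x @ V) (replicate (n + count_list V x) x @ filter (\<lambda>y. y \<noteq> x) V)"
    by (rule L3[OF assms(1,2)])
  have c1: "count_list (concat (map (\<lambda>i. W i @ [x]) [1..<n+1])) x = n"
    unfolding count_concat_map using Wx by (simp add: count_list_0_iff) (simp add: sum_list_triv)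
  have c2: "count_list (concat (map W [1..<n+1])) x = 0"
    unfolding count_concat_map using Wx by (simp add: count_list_0_iff)
  have f1: "filter (\<lambda>y. y \<noteq> x) (concat (map (\<lambda>i. W i @ [x]) [1..<n+1])) = concat (map W [1..<n+1])"
    using Wx by (rule filter_concat_map_x)
  have "count_list w x = n + count_list V x" unfolding w V_def using c1 c2 by simp
  moreover have "filter (\<lambda>y. y \<noteq> x) w = filter (\<lambda>y. y \<noteq> x) V"
    unfolding w V_def filter_append f1 filter_concat_map_free[OF Wx] by simp
  ultimately show ?thesis using derives.trans[OF s1 s2] by simp
qed




fun rw :: "nat \<Rightarrow> nat list \<Rightarrow> nat list \<Rightarrow> word" where
  "rw x [] es = replicate (hd es) x"
| "rw x (t # ts) es = replicate (hd es) x @ t # rw x ts (tl es)"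

lemma cm_shift: "concat (map f [0..<Suc L]) = f 0 @ concat (map (\<lambda>i. f (Suc i)) [0..<L])"
  by (induct L) auto

lemma rigid_rw: "length es = length ts + 1 \<Longrightarrow> rigid_word x ts es = rw x ts es"
proof (induct ts arbitrary: es)
  case Nil
  then show ?case by (cases es) (auto simp: rigid_word_def)
next
  case (Cons t ts)
  then obtain e es' where es: "es = e # es'" by (cases es) auto
  have l: "length es' = length ts + 1" using Cons(2) es by simp
  have u: "[0..<Suc (length ts)] = 0 # map Suc [0..<length ts]" by (metis map_Suc_upt upt_conv_Cons zero_less_Suc)
  have "rigid_word x (t # ts) es = replicate e x @ t # rigid_word x ts es'"
    by (simp add: rigid_word_def es cm_shift del: upt_Suc)
  then show ?case using Cons(1)[OF l] es by simp
qed

fun gaps :: "nat \<Rightarrow> word \<Rightarrow> nat list" where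
  "gaps x [] = [0]"
| "gaps x (y # w) = (if y = x then (hd (gaps x w) + 1) # tl (gaps x w) else 0 # gaps x w)"

lemma gaps_ne: "gaps x w \<noteq> []" by (induct w) auto

lemma gaps_rep: "gaps x (replicate k x @ w) = (hd (gaps x w) + k) # tl (gaps x w)"
  by (induct k) (auto simp: gaps_ne)

lemma gaps_free: "x \<notin> set P \<Longrightarrow> gaps x (P @ w) = replicate (length P) 0 @ gaps x w"
  by (induct P) auto

lemma gaps_rw: "x \<notin> set ts \<Longrightarrow> length es = length ts + 1 \<Longrightarrow> gaps x (rw x ts es) = es"
proof (induct ts arbitrary: es)
  case Nil then show ?case using gaps_rep[of x "hd es" "[]"] by (cases es) auto
next
  case (Cons t ts)
  then obtain e es' where es: "es = e # es'" by (cases es) auto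
  show ?case using Cons es gaps_rep[of x e "t # rw x ts es'"] by simp
qed

definition nz :: "nat list \<Rightarrow> nat" where "nz g = length (filter (\<lambda>e. e \<noteq> 0) g)"

lemma nz_rep: "nz (gaps x (replicate k x @ w)) \<le> Suc (nz (gaps x w))"
proof -
  obtain a g where g: "gaps x w = a # g" using gaps_ne by (metis list.exhaust)
  show ?thesis unfolding gaps_rep g nz_def by simp
qed

lemma nz_free: "x \<notin> set P \<Longrightarrow> nz (gaps x (P @ w)) = nz (gaps x w)"
  by (simp add: gaps_free nz_def)

lemma nz_shape: assumes "shape2 x w" shows "nz (gaps x w) \<le> 2"
proof -
  obtain P W Q i j where w: "w = P @ replicate i x @ W @ replicate j x @ Q" "x \<notin> set P" "x \<notin> set W" "x \<notin> set Q"
    using assms unfolding shape2_def by blast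
  have q: "nz (gaps x Q) = 0" using nz_free[OF w(4), of "[]"] by (simp add: nz_def)
  have "nz (gaps x w) = nz (gaps x (replicate i x @ W @ replicate j x @ Q))" unfolding w(1) using nz_free[OF w(2)] by simp
  also have "\<dots> \<le> Suc (nz (gaps x (W @ replicate j x @ Q)))" by (rule nz_rep)
  also have "nz (gaps x (W @ replicate j x @ Q)) = nz (gaps x (replicate j x @ Q))" using nz_free[OF w(3)] by simp
  also have "\<dots> \<le> Suc (nz (gaps x Q))" by (rule nz_rep)
  finally show ?thesis using q by simp
qed

lemma count_rw_x: "x \<notin> set ts \<Longrightarrow> length es = length ts + 1 \<Longrightarrow> count_list (rw x ts es) x = sum_list es"
proof (induct ts arbitrary: es)
  case Nil then show ?case by (cases es) (auto simp: count_replicate)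
next
  case (Cons t ts) then show ?case by (cases es) (auto simp: count_replicate)
qed

lemma count_rw_y: "y \<noteq> x \<Longrightarrow> count_list (rw x ts es) y = count_list ts y"
  by (induct ts arbitrary: es) (auto simp: count_replicate)

lemma filter_rw: "x \<notin> set ts \<Longrightarrow> filter (\<lambda>y. y \<noteq> x) (rw x ts es) = ts"
  by (induct ts arbitrary: es) auto

lemma subst_rw_zero: "(\<forall>y\<in>set ts. \<sigma> y = []) \<Longrightarrow> \<sigma> x = [z] \<Longrightarrow> length es = length ts + 1 \<Longrightarrow>
   subst \<sigma> (rw x ts es) = replicate (sum_list es) z"
proof (induct ts arbitrary: es)
  case Nil then show ?case by (cases es) auto
next
  case (Cons t ts) then show ?case by (cases es) (auto simp: replicate_add)
qed

definition Bw :: "nat \<Rightarrow> nat \<Rightarrow> word" where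
  "Bw n g = replicate g 0 @ [1] @ replicate (n - 1 - g) 0"

definition alpha :: "nat list \<Rightarrow> nat \<Rightarrow> nat" where "alpha es m = sum_list (take (Suc m) es)"

lemma sum_take_le: "sum_list (take k (xs::nat list)) \<le> sum_list xs"
  by (metis append_take_drop_id sum_list_append le_add1)

lemma subst_rw_edge:
  assumes "distinct (x # ts)" "m < length ts" "length es = length ts + 1"
  shows "subst (\<lambda>y. if y = x then [0] else if y = ts ! m then [1] else []) (rw x ts es) =
     replicate (alpha es m) 0 @ [1] @ replicate (sum_list es - alpha es m) 0"
  using assms
proof (induct ts arbitrary: es m)
  case Nil then show ?case by simp
next
  case (Cons t ts)
  then obtain e es' where es: "es = e # es'" by (cases es) auto
  have l: "length es' = length ts + 1" using Cons(4) es by simp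
  show ?case
  proof (cases m)
    case 0
    have z: "subst (\<lambda>y. if y = x then [0] else if y = (t # ts) ! m then [1] else []) (rw x ts es') = replicate (sum_list es') 0"
      by (rule subst_rw_zero) (use Cons(2) 0 l in auto)
    show ?thesis using z 0 es Cons(2) by (simp add: alpha_def)
  next
    case (Suc m')
    have tn: "t \<noteq> ts ! m'" using Cons(2,3) Suc by (metis distinct.simps(2) list.set_intros(2) nth_mem length_Cons Suc_less_SucD)
    have ih: "subst (\<lambda>y. if y = x then [0] else if y = ts ! m' then [1] else []) (rw x ts es') =
     replicate (alpha es' m') 0 @ [1] @ replicate (sum_list es' - alpha es' m') 0"
      using Cons(1)[of m' es'] Cons(2,3) Suc l by simp
    have le: "alpha es' m' \<le> sum_list es'" unfolding alpha_def by (rule sum_take_le)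
    show ?thesis unfolding Suc nth_Cons_Suc using ih es Cons(2) tn le by (simp add: alpha_def replicate_add[symmetric])
  qed
qed

lemma move:
  assumes d: "derives \<Sigma> (Bw n g) (Bw n g')"
    and a: "a = P @ replicate g x @ W @ replicate (n - 1 - g) x @ Q"
    and b: "b = P @ replicate g' x @ W @ replicate (n - 1 - g') x @ Q"
  shows "derives \<Sigma> a b"
proof -
  define \<sigma> where "\<sigma> = (\<lambda>y::nat. if y = 0 then [x] else if y = 1 then W else [])"
  have s: "subst \<sigma> (Bw n h) = replicate h x @ W @ replicate (n - 1 - h) x" for h
    by (simp add: Bw_def \<sigma>_def)
  have "derives \<Sigma> (subst \<sigma> (Bw n g)) (subst \<sigma> (Bw n g'))" using d derives.subst by blast
  then have "derives \<Sigma> (P @ subst \<sigma> (Bw n g) @ Q) (P @ subst \<sigma> (Bw n g') @ Q)" using derives.mult by blast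
  then show ?thesis unfolding a b s by simp
qed




abbreviation R where "R \<Sigma> n a b \<equiv> derives \<Sigma> (Bw n a) (Bw n b)"

lemma Rsym: "R \<Sigma> n a b \<Longrightarrow> R \<Sigma> n b a" by (rule derives.sym)
lemma Rtrans: "R \<Sigma> n a b \<Longrightarrow> R \<Sigma> n b c \<Longrightarrow> R \<Sigma> n a c" by (rule derives.trans)

lemma path1:
  assumes "R \<Sigma> n e0 f0" "e0 + e1 = n - 1" "f0 + f1 = n - 1"
  shows "derives \<Sigma> (rw x [t1] [e0,e1]) (rw x [t1] [f0,f1])"
proof -
  have ar: "n - Suc e0 = e1" "n - Suc f0 = f1" using assms by arith+
  show ?thesis by (rule move[OF assms(1), where P="[]" and W="[t1]" and x=x and Q="[]"]) (simp_all add: ar)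
qed

lemma pathA:
  assumes "R \<Sigma> n e0 0" "R \<Sigma> n (n - 1) f1" "e0 + e1 = n - 1" "f1 + f2 = n - 1"
  shows "derives \<Sigma> (rw x [t1,t2] [e0,e1,0]) (rw x [t1,t2] [0,f1,f2])"
proof -
  have ar: "n - Suc e0 = e1" "n - Suc f1 = f2" using assms by arith+
  have "derives \<Sigma> (rw x [t1,t2] [e0,e1,0]) (rw x [t1,t2] [0,n-1,0])"
    by (rule move[OF assms(1), where P="[]" and W="[t1]" and x=x and Q="[t2]"]) (simp_all add: ar)
  moreover have "derives \<Sigma> (rw x [t1,t2] [0,n-1,0]) (rw x [t1,t2] [0,f1,f2])"
    by (rule move[OF assms(2), where P="[t1]" and W="[t2]" and x=x and Q="[]"]) (simp_all add: ar)
  ultimately show ?thesis by (rule derives.trans)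
qed

lemma pathB:
  assumes "R \<Sigma> n e0 f0" "R \<Sigma> n (n - 1) f0" "e0 + e1 = n - 1" "f0 + f2 = n - 1"
  shows "derives \<Sigma> (rw x [t1,t2] [e0,e1,0]) (rw x [t1,t2] [f0,0,f2])"
proof -
  have ar: "n - Suc e0 = e1" "n - Suc f0 = f2" using assms by arith+
  have r: "R \<Sigma> n e0 (n - 1)" using Rtrans[OF assms(1) Rsym[OF assms(2)]] .
  have "derives \<Sigma> (rw x [t1,t2] [e0,e1,0]) (rw x [t1,t2] [n-1,0,0])"
    by (rule move[OF r, where P="[]" and W="[t1]" and x=x and Q="[t2]"]) (simp_all add: ar)
  moreover have "derives \<Sigma> (rw x [t1,t2] [n-1,0,0]) (rw x [t1,t2] [f0,0,f2])"
    by (rule move[OF assms(2), where P="[]" and W="[t1,t2]" and x=x and Q="[]"]) (simp_all add: ar)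
  ultimately show ?thesis by (rule derives.trans)
qed

lemma pathC:
  assumes "R \<Sigma> n e0 0" "R \<Sigma> n e0 f1" "e0 + e2 = n - 1" "f1 + f2 = n - 1"
  shows "derives \<Sigma> (rw x [t1,t2] [e0,0,e2]) (rw x [t1,t2] [0,f1,f2])"
proof -
  have ar: "n - Suc e0 = e2" "n - Suc f1 = f2" using assms by arith+
  have r: "R \<Sigma> n 0 f1" using Rtrans[OF Rsym[OF assms(1)] assms(2)] .
  have "derives \<Sigma> (rw x [t1,t2] [e0,0,e2]) (rw x [t1,t2] [0,0,n-1])"
    by (rule move[OF assms(1), where P="[]" and W="[t1,t2]" and x=x and Q="[]"]) (simp_all add: ar)
  moreover have "derives \<Sigma> (rw x [t1,t2] [0,0,n-1]) (rw x [t1,t2] [0,f1,f2])"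
    by (rule move[OF r, where P="[t1]" and W="[t2]" and x=x and Q="[]"]) (simp_all add: ar)
  ultimately show ?thesis by (rule derives.trans)
qed

lemma pathD:
  assumes "R \<Sigma> n e0 0" "R \<Sigma> n (n - 1) 0" "R \<Sigma> n (n - 1) f2" "e0 + e1 = n - 1" "f2 + f3 = n - 1"
  shows "derives \<Sigma> (rw x [t1,t2,t3] [e0,e1,0,0]) (rw x [t1,t2,t3] [0,0,f2,f3])"
proof -
  have ar: "n - Suc e0 = e1" "n - Suc f2 = f3" using assms by arith+
  have r: "R \<Sigma> n 0 f2" using Rtrans[OF Rsym[OF assms(2)] assms(3)] .
  have s1: "derives \<Sigma> (rw x [t1,t2,t3] [e0,e1,0,0]) (rw x [t1,t2,t3] [0,n-1,0,0])"
    by (rule move[OF assms(1), where P="[]" and W="[t1]" and x=x and Q="[t2,t3]"]) (simp_all add: ar)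
  have s2: "derives \<Sigma> (rw x [t1,t2,t3] [0,n-1,0,0]) (rw x [t1,t2,t3] [0,0,0,n-1])"
    by (rule move[OF assms(2), where P="[t1]" and W="[t2,t3]" and x=x and Q="[]"]) (simp_all add: ar)
  have s3: "derives \<Sigma> (rw x [t1,t2,t3] [0,0,0,n-1]) (rw x [t1,t2,t3] [0,0,f2,f3])"
    by (rule move[OF r, where P="[t1,t2]" and W="[t3]" and x=x and Q="[]"]) (simp_all add: ar)
  show ?thesis by (rule derives.trans[OF derives.trans[OF s1 s2] s3])
qed

lemma pathE:
  assumes "R \<Sigma> n e0 0" "R \<Sigma> n e0 f1" "R \<Sigma> n (n - 1) f1" "e0 + e2 = n - 1" "f1 + f3 = n - 1"
  shows "derives \<Sigma> (rw x [t1,t2,t3] [e0,0,e2,0]) (rw x [t1,t2,t3] [0,f1,0,f3])"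
proof -
  have ar: "n - Suc e0 = e2" "n - Suc f1 = f3" using assms by arith+
  have r: "R \<Sigma> n 0 (n - 1)" using Rtrans[OF Rsym[OF assms(1)] Rtrans[OF assms(2) Rsym[OF assms(3)]]] .
  have s1: "derives \<Sigma> (rw x [t1,t2,t3] [e0,0,e2,0]) (rw x [t1,t2,t3] [0,0,n-1,0])"
    by (rule move[OF assms(1), where P="[]" and W="[t1,t2]" and x=x and Q="[t3]"]) (simp_all add: ar)
  have s2: "derives \<Sigma> (rw x [t1,t2,t3] [0,0,n-1,0]) (rw x [t1,t2,t3] [0,n-1,0,0])"
    by (rule move[OF r, where P="[t1]" and W="[t2]" and x=x and Q="[t3]"]) (simp_all add: ar)
  have s3: "derives \<Sigma> (rw x [t1,t2,t3] [0,n-1,0,0]) (rw x [t1,t2,t3] [0,f1,0,f3])"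
    by (rule move[OF assms(3), where P="[t1]" and W="[t2,t3]" and x=x and Q="[]"]) (simp_all add: ar)
  show ?thesis by (rule derives.trans[OF derives.trans[OF s1 s2] s3])
qed

lemma pathF:
  assumes "R \<Sigma> n e0 0" "R \<Sigma> n e0 f1" "R \<Sigma> n e0 (n - 1)" "e0 + e3 = n - 1" "f1 + f2 = n - 1"
  shows "derives \<Sigma> (rw x [t1,t2,t3] [e0,0,0,e3]) (rw x [t1,t2,t3] [0,f1,f2,0])"
proof -
  have ar: "n - Suc e0 = e3" "n - Suc f1 = f2" using assms by arith+
  have r1: "R \<Sigma> n 0 (n - 1)" using Rtrans[OF Rsym[OF assms(1)] assms(3)] .
  have r2: "R \<Sigma> n (n - 1) f1" using Rtrans[OF Rsym[OF assms(3)] assms(2)] .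
  have s1: "derives \<Sigma> (rw x [t1,t2,t3] [e0,0,0,e3]) (rw x [t1,t2,t3] [0,0,0,n-1])"
    by (rule move[OF assms(1), where P="[]" and W="[t1,t2,t3]" and x=x and Q="[]"]) (simp_all add: ar)
  have s2: "derives \<Sigma> (rw x [t1,t2,t3] [0,0,0,n-1]) (rw x [t1,t2,t3] [0,n-1,0,0])"
    by (rule move[OF r1, where P="[t1]" and W="[t2,t3]" and x=x and Q="[]"]) (simp_all add: ar)
  have s3: "derives \<Sigma> (rw x [t1,t2,t3] [0,n-1,0,0]) (rw x [t1,t2,t3] [0,f1,f2,0])"
    by (rule move[OF r2, where P="[t1]" and W="[t2]" and x=x and Q="[t3]"]) (simp_all add: ar)
  show ?thesis by (rule derives.trans[OF derives.trans[OF s1 s2] s3])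
qed




lemma len1: "length xs = 1 \<Longrightarrow> \<exists>a. xs = [a]" by (auto simp: length_Suc_conv)
lemma len2: "length xs = 2 \<Longrightarrow> \<exists>a b. xs = [a,b]" by (auto simp: numeral_eq_Suc length_Suc_conv)
lemma len3: "length xs = 3 \<Longrightarrow> \<exists>a b c. xs = [a,b,c]" by (auto simp: numeral_eq_Suc length_Suc_conv)
lemma len4: "length xs = 4 \<Longrightarrow> \<exists>a b c d. xs = [a,b,c,d]" by (auto simp: numeral_eq_Suc length_Suc_conv)

lemma len_le_nz:
  assumes "length es = length fs" "\<forall>i<length es. es ! i \<noteq> 0 \<or> fs ! i \<noteq> 0"
  shows "length es \<le> nz es + nz fs"
proof -
  have "{i. i < length es} \<subseteq> {i. i < length es \<and> es ! i \<noteq> 0} \<union> {i. i < length fs \<and> fs ! i \<noteq> 0}"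
    using assms by auto
  then have "card {i. i < length es} \<le> card ({i. i < length es \<and> es ! i \<noteq> 0} \<union> {i. i < length fs \<and> fs ! i \<noteq> 0})"
    by (rule card_mono[rotated]) auto
  also have "\<dots> \<le> card {i. i < length es \<and> es ! i \<noteq> 0} + card {i. i < length fs \<and> fs ! i \<noteq> 0}"
    by (rule card_Un_le)
  finally show ?thesis unfolding nz_def length_filter_conv_card by simp
qed

lemma path_main:
  assumes n: "n \<ge> 3"
    and l: "length es = length ts + 1" "length fs = length ts + 1"
    and nze: "nz es \<le> 2" and nzf: "nz fs \<le> 2"
    and eff: "\<forall>i<length es. es ! i \<noteq> 0 \<or> fs ! i \<noteq> 0"
    and se: "sum_list es = n - 1" and sf: "sum_list fs = n - 1"
    and E: "\<And>m. m < length ts \<Longrightarrow> R \<Sigma> n (alpha es m) (alpha fs m)"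
  shows "derives \<Sigma> (rw x ts es) (rw x ts fs)"
proof -
  have "length es \<le> 4" using len_le_nz[OF _ eff] l nze nzf by simp
  then have "length ts = 0 \<or> length ts = 1 \<or> length ts = 2 \<or> length ts = 3" using l by presburger
  then consider "length ts = 0" | "length ts = 1" | "length ts = 2" | "length ts = 3" by blast
  then show ?thesis
  proof cases
    case 1
    then obtain e f where "es = [e]" "fs = [f]" using l len1 by fastforce
    then show ?thesis using 1 se sf by (simp add: derives.refl)
  next
    case 2
    then obtain t1 e0 e1 f0 f1 where tt: "ts = [t1]" "es = [e0,e1]" "fs = [f0,f1]"
    proof -
      have a: "length es = 2" and b: "length fs = 2" using l 2 by simp_all
      show ?thesis using that len1[OF 2] len2[OF a] len2[OF b] by blast
    qed
    have E0: "R \<Sigma> n e0 f0" using E[of 0] tt by (simp add: alpha_def)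
    show ?thesis unfolding tt by (rule path1[OF E0]) (use se sf tt in simp)+
  next
    case 3
    then obtain t1 t2 e0 e1 e2 f0 f1 f2 where tt: "ts = [t1,t2]" "es = [e0,e1,e2]" "fs = [f0,f1,f2]"
    proof -
      have a: "length es = 3" and b: "length fs = 3" using l 3 by simp_all
      show ?thesis using that len2[OF 3] len3[OF a] len3[OF b] by blast
    qed
    have E0: "R \<Sigma> n e0 f0" using E[of 0] tt by (simp add: alpha_def)
    have E1: "R \<Sigma> n (e0 + e1) (f0 + f1)" using E[of 1] tt by (simp add: alpha_def)
    have se': "e0 + e1 + e2 = n - 1" and sf': "f0 + f1 + f2 = n - 1" using se sf tt by simp_all
    have ef: "e0 \<noteq> 0 \<or> f0 \<noteq> 0" "e1 \<noteq> 0 \<or> f1 \<noteq> 0" "e2 \<noteq> 0 \<or> f2 \<noteq> 0"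
      using eff tt by (auto dest: spec[of _ 0] spec[of _ 1] spec[of _ 2])
    have z: "e0 = 0 \<or> e1 = 0 \<or> e2 = 0" "f0 = 0 \<or> f1 = 0 \<or> f2 = 0"
      using nze nzf tt by (auto simp: nz_def split: if_splits)
    consider "e2 = 0" "f0 = 0" | "e2 = 0" "f1 = 0" | "e1 = 0" "f0 = 0" | "e1 = 0" "f2 = 0"
      | "e0 = 0" "f1 = 0" | "e0 = 0" "f2 = 0" using ef z by blast
    then show ?thesis
    proof cases
      case 1
      then show ?thesis unfolding tt using pathA[of \<Sigma> n e0 f1 e1 f2 x t1 t2] E0 E1 se' sf' by simp
    next
      case 2
      then show ?thesis unfolding tt using pathB[of \<Sigma> n e0 f0 e1 f2 x t1 t2] E0 E1 se' sf' by simp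
    next
      case 3
      then show ?thesis unfolding tt using pathC[of \<Sigma> n e0 f1 e2 f2 x t1 t2] E0 E1 se' sf' by simp
    next
      case 4
      then show ?thesis unfolding tt using pathB[of \<Sigma> n f0 e0 f1 e2 x t1 t2] Rsym[OF E0] Rsym[OF E1] se' sf'
        by (simp add: derives.sym)
    next
      case 5
      then show ?thesis unfolding tt using pathC[of \<Sigma> n f0 e1 f2 e2 x t1 t2] Rsym[OF E0] Rsym[OF E1] se' sf'
        by (simp add: derives.sym)
    next
      case 6
      then show ?thesis unfolding tt using pathA[of \<Sigma> n f0 e1 f1 e2 x t1 t2] Rsym[OF E0] Rsym[OF E1] se' sf'
        by (simp add: derives.sym)
    qed
  next
    case 4
    then obtain t1 t2 t3 e0 e1 e2 e3 f0 f1 f2 f3 where tt: "ts = [t1,t2,t3]" "es = [e0,e1,e2,e3]" "fs = [f0,f1,f2,f3]"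
    proof -
      have a: "length es = 4" and b: "length fs = 4" using l 4 by simp_all
      show ?thesis using that len3[OF 4] len4[OF a] len4[OF b] by blast
    qed
    have E0: "R \<Sigma> n e0 f0" using E[of 0] tt by (simp add: alpha_def)
    have E1: "R \<Sigma> n (e0 + e1) (f0 + f1)" using E[of 1] tt by (simp add: alpha_def)
    have E2: "R \<Sigma> n (e0 + e1 + e2) (f0 + f1 + f2)" using E[of 2] tt by (simp add: alpha_def numeral_2_eq_2 add.assoc)
    have se': "e0 + e1 + e2 + e3 = n - 1" and sf': "f0 + f1 + f2 + f3 = n - 1" using se sf tt by simp_all
    have ef: "e0 \<noteq> 0 \<or> f0 \<noteq> 0" "e1 \<noteq> 0 \<or> f1 \<noteq> 0" "e2 \<noteq> 0 \<or> f2 \<noteq> 0" "e3 \<noteq> 0 \<or> f3 \<noteq> 0"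
      using eff tt by (auto dest: spec[of _ 0] spec[of _ 1] spec[of _ 2] spec[of _ 3])
    have z: "length (filter (\<lambda>e. e \<noteq> 0) [e0,e1,e2,e3]) \<le> 2" "length (filter (\<lambda>e. e \<noteq> 0) [f0,f1,f2,f3]) \<le> 2"
      using nze nzf tt by (auto simp: nz_def)
    consider "e2 = 0" "e3 = 0" "f0 = 0" "f1 = 0" | "e1 = 0" "e3 = 0" "f0 = 0" "f2 = 0"
      | "e1 = 0" "e2 = 0" "f0 = 0" "f3 = 0" | "e0 = 0" "e1 = 0" "f2 = 0" "f3 = 0"
      | "e0 = 0" "e2 = 0" "f1 = 0" "f3 = 0" | "e0 = 0" "e3 = 0" "f1 = 0" "f2 = 0"
      using ef z by (auto split: if_splits)
    then show ?thesis
    proof cases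
      case 1
      then show ?thesis unfolding tt using pathD[of \<Sigma> n e0 f2 e1 f3 x t1 t2 t3] E0 E1 E2 se' sf' by simp
    next
      case 2
      then show ?thesis unfolding tt using pathE[of \<Sigma> n e0 f1 e2 f3 x t1 t2 t3] E0 E1 E2 se' sf' by simp
    next
      case 3
      then show ?thesis unfolding tt using pathF[of \<Sigma> n e0 f1 e3 f2 x t1 t2 t3] E0 E1 E2 se' sf' by simp
    next
      case 4
      then show ?thesis unfolding tt using pathD[of \<Sigma> n f0 e2 f1 e3 x t1 t2 t3] Rsym[OF E0] Rsym[OF E1] Rsym[OF E2] se' sf'
        by (simp add: derives.sym)
    next
      case 5
      then show ?thesis unfolding tt using pathE[of \<Sigma> n f0 e1 f2 e3 x t1 t2 t3] Rsym[OF E0] Rsym[OF E1] Rsym[OF E2] se' sf'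
        by (simp add: derives.sym)
    next
      case 6
      then show ?thesis unfolding tt using pathF[of \<Sigma> n f0 e1 f3 e2 x t1 t2 t3] Rsym[OF E0] Rsym[OF E1] Rsym[OF E2] se' sf'
        by (simp add: derives.sym)
    qed
  qed
qed




lemma distinct_count_le1: "distinct xs \<Longrightarrow> count_list xs y \<le> 1"
  by (induct xs) (auto simp: count_list_0_iff)

lemma Bw_in: assumes "g \<le> n - 1" shows "Bw n g \<in> B_words n"
proof -
  have "n - 1 - (n - 1 - g) = g" "n - 1 - g \<le> n - 1" using assms by arith+
  then show ?thesis unfolding Bw_def B_words_def by (intro CollectI exI[of _ "n - 1 - g"]) simp
qed

theorem mainTheorem4:
  fixes n :: nat and u v :: word
  assumes "n \<ge> 3"
    and "efficient_rigid u v"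
    and "\<not> derives (An_ids n) u v"
    and "derives (An_ids n \<union> B_ids n) u v"
  shows "\<exists>S \<subseteq> B_ids n.
           (\<forall>(s, t) \<in> S. derives (An_ids n \<union> {(u, v)}) s t) \<and>
           derives (An_ids n \<union> S) u v"
proof -
  obtain x ts es fs where d: "distinct (x # ts)" and le: "length es = length ts + 1"
    and lf: "length fs = length ts + 1" and eff: "\<forall>i<length es. es ! i \<noteq> 0 \<or> fs ! i \<noteq> 0"
    and u: "u = rigid_word x ts es" and v: "v = rigid_word x ts fs"
    using assms(2) unfolding efficient_rigid_def by blast
  have xt: "x \<notin> set ts" using d by simp
  have u': "u = rw x ts es" and v': "v = rw x ts fs" using u v rigid_rw le lf by auto
  have I: "Inv x n u v" using derives_Inv[OF assms(4)] Inv_all[OF assms(1)] by blast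
  have cnt: "count_list u y = count_list v y" for y
    using I unfolding Inv_def by (metis subst_id)
  have cu: "count_list u x = sum_list es" using count_rw_x[OF xt le] u' by simp
  have cv: "count_list v x = sum_list fs" using count_rw_x[OF xt lf] v' by simp
  have sef: "sum_list fs = sum_list es" using cnt[of x] cu cv by simp
  have fu: "filter (\<lambda>y. y \<noteq> x) u = ts" "filter (\<lambda>y. y \<noteq> x) v = ts"
    using filter_rw[OF xt] u' v' by auto
  have An: "A_identity n \<in> An_ids n" by (simp add: An_ids_def)
  show ?thesis
  proof (cases "sum_list es \<ge> n")
    case True
    have n1: "n \<ge> 1" using assms(1) by simp
    have "derives (An_ids n) u (replicate (sum_list es) x @ ts)"
      using L5[OF An n1, where w=u and x=x] True cu fu by simp
    moreover have "derives (An_ids n) v (replicate (sum_list es) x @ ts)"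
      using L5[OF An n1, where w=v and x=x] True cv sef fu by simp
    ultimately have "derives (An_ids n) u v" using derives.trans derives.sym by blast
    then show ?thesis using assms(3) by blast
  next
    case False
    have ok: "okw x n u" unfolding okw_def
    proof (intro conjI allI impI)
      fix y assume "y \<noteq> x"
      then have "count_list u y = count_list ts y" using count_rw_y u' by simp
      moreover have "count_list ts y \<le> 1" using distinct_count_le1[of ts y] d by simp
      ultimately show "count_list u y \<le> 1" by simp
    next
      show "count_list u x \<le> n - 1" using False cu by simp
    qed
    have nf: "NF x n u = NF x n v" using I ok unfolding Inv_def by (metis subst_id)
    have cond: "sum_list es = n - 1 \<and> shape2 x u \<and> shape2 x v"
    proof (rule ccontr)
      assume nc: "\<not> ?thesis"
      have "u = v"
      proof (cases "count_list u x = n - 1 \<and> shape2 x u")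
        case True
        then have "count_list v x = n - 1 \<and> shape2 x v" using nf by (auto simp: NF_def split: if_splits)
        then show ?thesis using True nc cu by simp
      next
        case False
        then show ?thesis using nf by (auto simp: NF_def split: if_splits)
      qed
      then show False using assms(3) derives.refl by blast
    qed
    have nze: "nz es \<le> 2" using nz_shape[of x u] cond gaps_rw[OF xt le] u' by simp
    have nzf: "nz fs \<le> 2" using nz_shape[of x v] cond gaps_rw[OF xt lf] v' by simp
    have se: "sum_list es = n - 1" and sf: "sum_list fs = n - 1" using cond sef by auto
    define S where "S = {(Bw n (alpha es m), Bw n (alpha fs m)) | m. m < length ts}"
    show ?thesis
    proof (intro exI[of _ S] conjI)
      show "S \<subseteq> B_ids n"
      proof
        fix p assume "p \<in> S"
        then obtain m where p: "p = (Bw n (alpha es m), Bw n (alpha fs m))" unfolding S_def by blast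
        have "alpha es m \<le> n - 1" "alpha fs m \<le> n - 1"
          using sum_take_le se sf unfolding alpha_def by metis+
        then show "p \<in> B_ids n" unfolding p B_ids_def using Bw_in by simp
      qed
      show "\<forall>(s, t) \<in> S. derives (An_ids n \<union> {(u, v)}) s t"
      proof (clarify)
        fix s t assume "(s, t) \<in> S"
        then obtain m where st: "s = Bw n (alpha es m)" "t = Bw n (alpha fs m)" and m: "m < length ts"
          unfolding S_def by blast
        define \<sigma> where "\<sigma> = (\<lambda>y. if y = x then [0] else if y = ts ! m then [1::nat] else [])"
        have "derives (An_ids n \<union> {(u, v)}) (subst \<sigma> u) (subst \<sigma> v)"
          by (rule derives.subst, rule derives.ax) simp
        moreover have "subst \<sigma> u = s" unfolding u' \<sigma>_def subst_rw_edge[OF d m le] st se Bw_def ..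
        moreover have "subst \<sigma> v = t" unfolding v' \<sigma>_def subst_rw_edge[OF d m lf] st sf Bw_def ..
        ultimately show "derives (An_ids n \<union> {(u, v)}) s t" by simp
      qed
      show "derives (An_ids n \<union> S) u v" unfolding u' v'
      proof (rule path_main[OF assms(1) le lf nze nzf eff se sf])
        fix m assume "m < length ts"
        then have "(Bw n (alpha es m), Bw n (alpha fs m)) \<in> An_ids n \<union> S" unfolding S_def by blast
        then show "R (An_ids n \<union> S) n (alpha es m) (alpha fs m)" by (rule derives.ax)
      qed
    qed
  qed
qed


end
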